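(* For every integer $d\ge7$ and every $k\ge3$, \[ \frac{1}{d}+\frac{1}{d^3}-\frac{1}{d^4}+\sum_{j=3}^{d} d^{-j}\, j! + (2\pi d)^{1/2}\Big(\frac{e^{-1/13}}{\sqrt{2\pi}}\Big)^{d}\,\zeta\Big(\frac{d-1}{2}\Big)-\frac{k}{2d}<0. \]
   Context: $\zeta$ denotes the Riemann zeta function. *)

theory Defs
  imports "HOL-Analysis.Analysis"
begin

text \<open>Riemann zeta function on real arguments s > 1, via its Dirichlet series
  (the library has no zeta function; only real s > 1 is needed here).\<close>
definition zeta :: "real \<Rightarrow> real" where
  "zeta s = (\<Sum>n. 1 / (real (Suc n)) powr s)"

end

theory Submission
  imports Defs "HOL-Analysis.Analysis"
begin

lemma zeta_bounds:
  assumes "s \<ge> 2"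
  shows "0 \<le> zeta s" "zeta s \<le> 33/20"
proof -
  have le: "1 / real (Suc n) powr s \<le> 1 / real ((n + 1)^2)" for n
  proof -
    have "(real n + 1) powr 2 \<le> (real n + 1) powr s"
      by (rule powr_mono) (use assms in auto)
    hence *: "(real n + 1) ^ 2 \<le> real (Suc n) powr s" by (simp add: add.commute powr_realpow)
    have p: "0 < real (Suc n) powr s" by simp
    have eq: "real ((n+1)^2) = (real n + 1)^2" by simp
    show ?thesis unfolding eq using * p by (intro divide_left_mono) (auto intro!: mult_pos_pos)
  qed
  have nn: "0 \<le> 1 / real (Suc n) powr s" for n by simp
  have sq: "summable (\<lambda>n. 1 / real ((n + 1)^2))"
    by (rule sums_summable[OF inverse_squares_sums])
  have nle: "norm (1 / real (Suc n) powr s) \<le> 1 / real ((n + 1)^2)" for n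
    using le[of n] nn[of n] by simp
  have sm: "summable (\<lambda>n. 1 / real (Suc n) powr s)"
    by (rule summable_comparison_test[OF _ sq]) (use nle in blast)
  show "0 \<le> zeta s" unfolding zeta_def by (rule suminf_nonneg[OF sm nn])
  have "zeta s \<le> (\<Sum>n. 1 / real ((n + 1)^2))"
    unfolding zeta_def by (rule suminf_le[OF le sm sq])
  also have "\<dots> = pi^2/6" by (rule sums_unique[OF inverse_squares_sums, symmetric])
  also have "\<dots> \<le> 33/20"
  proof -
    have "pi \<le> 3.1416" using pi_approx(2) by simp
    hence a: "pi^2 \<le> 3.1416^2" by (intro power_mono) auto
    have b: "(3.1416::real)^2 \<le> 9.9" by (simp add: power_divide)
    show ?thesis using a b by linarith
  qed
  finally show "zeta s \<le> 33/20" .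
qed

lemma fact_bound:
  assumes "5 \<le> j" "j \<le> d"
  shows "fact j \<le> (120::real) * real d ^ (j - 5)"
  using assms
proof (induction j rule: dec_induct)
  case base thus ?case by (simp add: fact_numeral)
next
  case (step m)
  have "fact (Suc m) = real (Suc m) * fact m" by simp
  also have "\<dots> \<le> real d * (120 * real d ^ (m - 5))"
    using step by (intro mult_mono) auto
  also have "\<dots> = 120 * real d ^ Suc (m - 5)" by simp
  also have "Suc (m - 5) = Suc m - 5" using step by simp
  finally show ?case .
qed

lemma sum_bound:
  assumes "d \<ge> 5"
  shows "(\<Sum>j = 3..d. fact j / real d ^ j) \<le> 6 / real d^3 + 24 / real d^4 + (real d - 4) * (120 / real d^5)"
proof -
  have split: "{3..d} = {3,4} \<union> {5..d}" using assms by auto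
  have "(\<Sum>j = 3..d. fact j / real d ^ j) = fact 3 / real d^3 + fact 4 / real d^4 + (\<Sum>j = 5..d. fact j / real d ^ j)"
    unfolding split by (subst sum.union_disjoint) auto
  also have "(\<Sum>j = 5..d. fact j / real d ^ j) \<le> (\<Sum>j = 5..d. 120 / real d ^ 5)"
  proof (rule sum_mono)
    fix j assume j: "j \<in> {5..d}"
    have dp: "real d > 0" using assms by simp
    have "fact j / real d ^ j \<le> 120 * real d ^ (j - 5) / real d ^ j"
      using fact_bound[of j d] j dp by (intro divide_right_mono) auto
    also have "real d ^ j = real d ^ (j-5) * real d ^ 5"
      using j by (simp add: power_add[symmetric])
    hence "120 * real d ^ (j - 5) / real d ^ j = 120 / real d ^ 5" using dp by simp
    finally show "fact j / real d ^ j \<le> 120 / real d ^ 5" .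
  qed
  also have "(\<Sum>j = 5..d. 120 / real d ^ 5) = (real d - 4) * (120 / real d^5)"
    using assms by (simp add: of_nat_diff)
  finally show ?thesis by (simp add: fact_numeral)
qed

lemma pow_bound:
  assumes "d \<ge> 10"
  shows "real d ^ 2 * (2/5) ^ d \<le> 100 * (2/5::real) ^ 10"
  using assms
proof (induction d rule: dec_induct)
  case base thus ?case by simp
next
  case (step m)
  have "real (Suc m) ^ 2 * (2/5) ^ Suc m = (2/5 * (real m + 1)^2) * (2/5) ^ m" by simp
  also have "\<dots> \<le> real m ^ 2 * (2/5) ^ m"
  proof (rule mult_right_mono)
    have m: "real m \<ge> 10" using step(1) by simp
    have "real m * (3 * real m - 4) \<ge> 10 * 26" using m by (intro mult_mono) auto
    thus "2/5 * (real m + 1)^2 \<le> real m ^ 2"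
      by (simp add: power2_eq_square algebra_simps)
  qed simp
  also note step.IH
  finally show ?case .
qed

lemma s7: "(\<Sum>j = 3..(7::nat). f j) = f 3 + f 4 + f 5 + f 6 + (f 7::real)"
  by (simp add: eval_nat_numeral)
lemma s8: "(\<Sum>j = 3..(8::nat). f j) = f 3 + f 4 + f 5 + f 6 + f 7 + (f 8::real)"
  by (simp add: eval_nat_numeral)
lemma s9: "(\<Sum>j = 3..(9::nat). f j) = f 3 + f 4 + f 5 + f 6 + f 7 + f 8 + (f 9::real)"
  by (simp add: eval_nat_numeral)

theorem lemma2p4:
  fixes d :: nat and k :: real
  assumes "d \<ge> 7" and "k \<ge> 3"
  shows "1 / real d + 1 / real d ^ 3 - 1 / real d ^ 4
         + (\<Sum>j = 3..d. fact j / real d ^ j)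
         + sqrt (2 * pi * real d) * (exp (- 1 / 13) / sqrt (2 * pi)) ^ d
             * zeta ((real d - 1) / 2)
         - k / (2 * real d) < 0"
proof -
  define x where "x = real d"
  define r where "r = exp (- 1 / 13) / sqrt (2 * pi)"
  define Z where "Z = zeta ((real d - 1) / 2)"
  define T where "T = sqrt (2 * pi * real d) * r ^ d * Z"
  have x7: "x \<ge> 7" using assms unfolding x_def by simp
  have Z: "0 \<le> Z" "Z \<le> 33/20" unfolding Z_def using assms zeta_bounds[of "(real d - 1) / 2"] by auto
  have r0: "0 \<le> r" unfolding r_def by simp
  have r1: "r \<le> 2/5"
  proof -
    have "exp (- 1 / 13) \<le> (1::real)" by simp
    have p: "(3.141592653588::real) \<le> pi" by (rule pi_approx(1))
    have p2: "25/4 \<le> 2 * pi" using pi_approx(1) by (simp add: power_numeral_even)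
    moreover have "sqrt (2 * pi) \<ge> sqrt (25/4)" using p2 by (rule real_sqrt_le_mono)
    moreover have "sqrt (25/4::real) = 5/2" by (simp add: real_sqrt_divide)
    ultimately have s: "sqrt (2 * pi) \<ge> 5/2" by simp
    have "r \<le> 1 / sqrt (2 * pi)" unfolding r_def by (intro divide_right_mono) auto
    also have "\<dots> \<le> 1 / (5/2)" using s by (intro divide_left_mono) auto
    finally show ?thesis by simp
  qed
  have sq: "sqrt (2 * pi * real d) \<le> x"
  proof -
    have "2 * pi * x \<le> x * x" using x7 pi_approx by (intro mult_right_mono) auto
    hence "sqrt (2 * pi * x) \<le> sqrt (x * x)" by (intro real_sqrt_le_mono)
    thus ?thesis using x7 unfolding x_def by simp
  qed
  have T: "T \<le> x * (2/5)^d * (33/20)"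
    unfolding T_def using sq r0 r1 Z x7
    by (intro mult_mono power_mono) auto
  have T0: "0 \<le> T" unfolding T_def using r0 Z by simp
  have k: "k / (2 * x) \<ge> 3 / (2 * x)" using assms x7 by (intro divide_right_mono) auto
  have main: "1 / x + 1 / x ^ 3 - 1 / x ^ 4 + (\<Sum>j = 3..d. fact j / x ^ j) + T < 3 / (2 * x)"
  proof -
    consider "d = 7" | "d = 8" | "d = 9" | "d \<ge> 10" using assms by linarith
    thus ?thesis
    proof cases
      case 1
      have "T \<le> 7 * (2/5)^7 * (33/20)" using T 1 unfolding x_def by simp
      thus ?thesis unfolding x_def 1 s7 by (simp add: fact_numeral power_divide)
    next
      case 2
      have "T \<le> 8 * (2/5)^8 * (33/20)" using T 2 unfolding x_def by simp
      thus ?thesis unfolding x_def 2 s8 by (simp add: fact_numeral power_divide)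
    next
      case 3
      have "T \<le> 9 * (2/5)^9 * (33/20)" using T 3 unfolding x_def by simp
      thus ?thesis unfolding x_def 3 s9 by (simp add: fact_numeral power_divide)
    next
      case 4
      have x10: "x \<ge> 10" using 4 unfolding x_def by simp
      have S: "(\<Sum>j = 3..d. fact j / x ^ j) \<le> 6 / x^3 + 24 / x^4 + (x - 4) * (120 / x^5)"
        using sum_bound[of d] 4 unfolding x_def by simp
      have P: "x^2 * (2/5)^d \<le> 100 * (2/5::real)^10" using pow_bound[OF 4] unfolding x_def .
      have "x * (1 / x + 1 / x ^ 3 - 1 / x ^ 4 + (\<Sum>j = 3..d. fact j / x ^ j) + T)
            \<le> x * (1 / x + 1 / x ^ 3 + 6 / x^3 + 24 / x^4 + (x - 4) * (120 / x^5) + x * (2/5)^d * (33/20))"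
      proof (rule mult_left_mono)
        have "0 \<le> 1 / x ^ 4" using x10 by simp
        thus "1 / x + 1 / x ^ 3 - 1 / x ^ 4 + (\<Sum>j = 3..d. fact j / x ^ j) + T
            \<le> 1 / x + 1 / x ^ 3 + 6 / x^3 + 24 / x^4 + (x - 4) * (120 / x^5) + x * (2/5)^d * (33/20)"
          using S T by linarith
      qed (use x10 in simp)
      also have "\<dots> = 1 + 7 / x^2 + 24 / x^3 + (x - 4) * (120 / x^4) + x^2 * (2/5)^d * (33/20)"
        using x10 by (simp add: field_simps eval_nat_numeral)
      also have "\<dots> < 3/2"
      proof -
        have x2: "10^2 \<le> x^2" using x10 by (intro power_mono) auto
        have x3: "10^3 \<le> x^3" using x10 by (intro power_mono) auto
        have a: "7 / x^2 \<le> 7/100" using x2 x10 by (intro divide_left_mono) auto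
        have b: "24 / x^3 \<le> 24/1000" using x3 x10 by (intro divide_left_mono) auto
        have c: "(x - 4) * (120 / x^4) \<le> 120 / x^3"
          using x10 by (simp add: field_simps eval_nat_numeral)
        have c2: "120 / x^3 \<le> 120/1000" using x3 x10 by (intro divide_left_mono) auto
        have e: "x^2 * (2/5)^d * (33/20) \<le> 100 * (2/5::real)^10 * (33/20)" using P by simp
        have e2: "(2/5::real)^10 = 1024/9765625" by (simp add: power_divide)
        show ?thesis using a b c c2 e e2 by linarith
      qed
      finally have "x * (1 / x + 1 / x ^ 3 - 1 / x ^ 4 + (\<Sum>j = 3..d. fact j / x ^ j) + T) < 3/2" .
      thus ?thesis using x10 by (simp add: field_simps)
    qed
  qed
  show ?thesis using main k unfolding x_def T_def r_def Z_def by linarith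
qed

end
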